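(* Let $F:\mathbb{R}^d\to\mathbb{R}$ be Lipschitz continuous with constant $L_0$, i.e. $|F(\theta_1)-F(\theta_2)|\le L_0\|\theta_1-\theta_2\|$ for all $\theta_1,\theta_2$. For $\eta>0$ define the Gaussian smoothing $$F_\eta(\theta)=\frac{1}{(2\pi)^{d/2}}\int_{\mathbb{R}^d}F(\theta+\eta v)\,e^{-\frac12\|v\|^2}\,dv=\mathbb{E}_v[F(\theta+\eta v)],$$ where $v\sim\mathcal{N}(0,I_d)$; $F_\eta$ is differentiable with $\nabla F_\eta(\theta)=\mathbb{E}_v\!\left[\frac{F(\theta+\eta v)-F(\theta)}{\eta}\,v\right]$. Then for any $\eta_1,\eta_2>0$ and any $\theta\in\mathbb{R}^d$, $$\|\nabla F_{\eta_2}(\theta)-\nabla F_{\eta_1}(\theta)\|\le\frac{2L_0\,d\,|\eta_2-\eta_1|}{\eta_2}.$$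
   Context: $\|\cdot\|$ denotes the Euclidean norm on $\mathbb{R}^d$, and $v$ is a standard Gaussian random vector in $\mathbb{R}^d$ (mean zero, identity covariance). *)

theory Defs
  imports "HOL-Analysis.Analysis"
begin

definition gauss_density :: "'a::euclidean_space \<Rightarrow> real" where
  "gauss_density v = (2 * pi) powr (- real DIM('a) / 2) * exp (- (norm v)\<^sup>2 / 2)"

definition gauss_smooth :: "('a::euclidean_space \<Rightarrow> real) \<Rightarrow> real \<Rightarrow> 'a \<Rightarrow> real" where
  "gauss_smooth F \<eta> \<theta> = (LINT v|lborel. F (\<theta> + \<eta> *\<^sub>R v) * gauss_density v)"

end

theory Submission
  imports Defs "HOL-Probability.Distributions"
begin


lemma gd_prod:
  fixes w :: "'a::euclidean_space"
  shows "gauss_density w = (\<Prod>b\<in>Basis. std_normal_density (w \<bullet> b))"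
proof -
  have n2: "(norm w)\<^sup>2 = (\<Sum>b\<in>Basis. (w \<bullet> b)\<^sup>2)"
  proof -
    have "(norm w)\<^sup>2 = w \<bullet> w" by (rule power2_norm_eq_inner)
    also have "\<dots> = (\<Sum>b\<in>Basis. (w \<bullet> b) * (w \<bullet> b))" by (rule euclidean_inner)
    finally show ?thesis by (simp only: power2_eq_square)
  qed
  have "(1 / sqrt (2*pi)) ^ DIM('a) = ((2*pi) powr (-(1/2))) ^ DIM('a)"
    by (simp add: powr_minus_divide powr_half_sqrt)
  also have "\<dots> = (2*pi) powr (real DIM('a) * (-(1/2)))" by (rule powr_power) simp
  also have "real DIM('a) * (-(1/2)) = - real DIM('a) / 2" by simp
  finally have "(2 * pi) powr (- real DIM('a) / 2) = (1 / sqrt (2*pi)) ^ DIM('a)" by simp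
  moreover have "exp (- (norm w)\<^sup>2 / 2) = (\<Prod>b\<in>Basis. exp (- (w \<bullet> b)\<^sup>2 / 2))"
    by (simp add: n2 exp_sum[symmetric] sum_negf sum_divide_distrib)
  ultimately show ?thesis
    by (simp add: gauss_density_def std_normal_density_def prod_dividef power_one_over)
qed

lemma nn_sn_moment:
  "(\<integral>\<^sup>+x. ennreal (std_normal_density x * x^(2*k)) \<partial>lborel) = ennreal (fact (2*k) / (2^k * fact k))"
  by (subst nn_integral_eq_integral)
     (auto simp: integrable_std_normal_moment integral_std_normal_moment_even normal_density_nonneg
           zero_le_even_power')

lemma nn_sn_f:
  "(\<integral>\<^sup>+x. ennreal (std_normal_density x * (if c then x\<^sup>2 else 1)) \<partial>lborel) = 1"
  using nn_sn_moment[of 0] nn_sn_moment[of 1] by (cases c) (simp_all add: numeral_eq_Suc)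

lemma gd_nonneg: "0 \<le> gauss_density w"
  by (simp add: gauss_density_def)

lemma gd_pos: "0 < gauss_density w"
  by (simp add: gauss_density_def)

lemma gd_measurable[measurable]: "gauss_density \<in> borel_measurable borel"
  unfolding gauss_density_def[abs_def] by measurable

lemma nn_gd: "(\<integral>\<^sup>+w. ennreal (gauss_density (w::'a::euclidean_space)) \<partial>lborel) = 1"
proof -
  have "(\<integral>\<^sup>+w. ennreal (gauss_density (w::'a)) \<partial>lborel)
     = (\<integral>\<^sup>+(w::'a). (\<Prod>b\<in>Basis. (\<lambda>b x. ennreal (std_normal_density x * (if False then x\<^sup>2 else 1))) b (w \<bullet> b)) \<partial>lborel)"
    by (simp add: gd_prod prod_ennreal normal_density_nonneg)
  also have "\<dots> = (\<Prod>b\<in>(Basis::'a set). 1)"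
    by (subst nn_integral_lborel_prod) (simp_all add: nn_sn_f del: if_False)
  finally show ?thesis by simp
qed

lemma nn_gd2: "(\<integral>\<^sup>+w. ennreal ((norm w)\<^sup>2 * gauss_density (w::'a::euclidean_space)) \<partial>lborel) = DIM('a)"
proof -
  have n2: "(norm w)\<^sup>2 = (\<Sum>b\<in>Basis. (w \<bullet> b)\<^sup>2)" for w :: 'a
  proof -
    have "(norm w)\<^sup>2 = w \<bullet> w" by (rule power2_norm_eq_inner)
    also have "\<dots> = (\<Sum>b\<in>Basis. (w \<bullet> b) * (w \<bullet> b))" by (rule euclidean_inner)
    finally show ?thesis by (simp only: power2_eq_square)
  qed
  have eq: "ennreal ((w \<bullet> b)\<^sup>2 * gauss_density w) =
     (\<Prod>b'\<in>Basis. (\<lambda>b' x. ennreal (std_normal_density x * (if b' = b then x\<^sup>2 else 1))) b' (w \<bullet> b'))"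
    if "b \<in> Basis" for w :: 'a and b
  proof -
    have "(\<Prod>b'\<in>Basis. std_normal_density (w \<bullet> b') * (if b' = b then (w \<bullet> b')\<^sup>2 else 1))
        = (\<Prod>b'\<in>Basis. std_normal_density (w \<bullet> b')) * (\<Prod>b'\<in>Basis. (if b' = b then (w \<bullet> b')\<^sup>2 else 1))"
      by (rule prod.distrib)
    also have "(\<Prod>b'\<in>Basis. (if b' = b then (w \<bullet> b')\<^sup>2 else 1)) = (w \<bullet> b)\<^sup>2"
      using that by (simp add: prod.delta)
    finally show ?thesis
      by (simp add: gd_prod prod_ennreal normal_density_nonneg mult.commute)
  qed
  have "(\<integral>\<^sup>+w. ennreal ((norm w)\<^sup>2 * gauss_density (w::'a)) \<partial>lborel)
      = (\<integral>\<^sup>+(w::'a). (\<Sum>b\<in>Basis. ennreal ((w \<bullet> b)\<^sup>2 * gauss_density w)) \<partial>lborel)"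
    by (simp add: n2 sum_distrib_right gd_nonneg)
  also have "\<dots> = (\<Sum>b\<in>Basis. (\<integral>\<^sup>+w. ennreal ((w \<bullet> b)\<^sup>2 * gauss_density (w::'a)) \<partial>lborel))"
    by (rule nn_integral_sum) auto
  also have "\<dots> = (\<Sum>b\<in>(Basis::'a set). 1)"
  proof (rule sum.cong[OF refl])
    fix b :: 'a assume b: "b \<in> Basis"
    have "(\<integral>\<^sup>+w. ennreal ((w \<bullet> b)\<^sup>2 * gauss_density (w::'a)) \<partial>lborel)
      = (\<integral>\<^sup>+(w::'a). (\<Prod>b'\<in>Basis. (\<lambda>b' x. ennreal (std_normal_density x * (if b' = b then x\<^sup>2 else 1))) b' (w \<bullet> b')) \<partial>lborel)"
      using eq[OF b] by simp
    also have "\<dots> = (\<Prod>b'\<in>(Basis::'a set). 1)"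
      by (subst nn_integral_lborel_prod) (simp_all add: nn_sn_f normal_density_nonneg)
    finally show "(\<integral>\<^sup>+w. ennreal ((w \<bullet> b)\<^sup>2 * gauss_density (w::'a)) \<partial>lborel) = 1" by simp
  qed
  finally show ?thesis by simp
qed

lemma int_gd: "integrable lborel (gauss_density :: 'a::euclidean_space \<Rightarrow> real)"
  and int_gd_eq: "integral\<^sup>L lborel (gauss_density :: 'a::euclidean_space \<Rightarrow> real) = 1"
proof -
  show "integrable lborel (gauss_density :: 'a::euclidean_space \<Rightarrow> real)"
    by (rule integrableI_nonneg) (auto simp: nn_gd gd_nonneg)
  show "integral\<^sup>L lborel (gauss_density :: 'a::euclidean_space \<Rightarrow> real) = 1"
    by (subst integral_eq_nn_integral) (auto simp: nn_gd gd_nonneg)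
qed

lemma int_gd2: "integrable lborel (\<lambda>w::'a::euclidean_space. (norm w)\<^sup>2 * gauss_density w)"
  and int_gd2_eq: "(\<integral>w. (norm w)\<^sup>2 * gauss_density (w::'a::euclidean_space) \<partial>lborel) = DIM('a)"
proof -
  show "integrable lborel (\<lambda>w::'a::euclidean_space. (norm w)\<^sup>2 * gauss_density w)"
    by (rule integrableI_nonneg) (auto simp: nn_gd2 gd_nonneg of_nat_less_top)
  show "(\<integral>w. (norm w)\<^sup>2 * gauss_density (w::'a::euclidean_space) \<partial>lborel) = DIM('a)"
    by (subst integral_eq_nn_integral) (auto simp: nn_gd2 gd_nonneg)
qed

lemma int_gd1: "integrable lborel (\<lambda>w::'a::euclidean_space. norm w * gauss_density w)"
proof (rule Bochner_Integration.integrable_bound[OF Bochner_Integration.integrable_add[OF int_gd int_gd2]])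
  show "(\<lambda>w::'a. norm w * gauss_density w) \<in> borel_measurable lborel" by measurable
  show "AE x in lborel. norm (norm (x::'a) * gauss_density x) \<le> norm (gauss_density x + (norm x)\<^sup>2 * gauss_density x)"
  proof (rule AE_I2)
    fix x :: 'a
    have "norm x \<le> 1 + (norm x)\<^sup>2"
    proof (cases "norm x \<le> 1")
      case True then show ?thesis by (simp add: power2_eq_square) (smt (verit) norm_ge_zero zero_le_mult_iff)
    next
      case False
      then have "norm x * 1 \<le> norm x * norm x" by (intro mult_left_mono) auto
      then show ?thesis by (simp add: power2_eq_square)
    qed
    hence "norm x * gauss_density x \<le> (1 + (norm x)\<^sup>2) * gauss_density x"
      by (rule mult_right_mono) (rule gd_nonneg)
    thus "norm (norm (x::'a) * gauss_density x) \<le> norm (gauss_density x + (norm x)\<^sup>2 * gauss_density x)"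
      using gd_nonneg[of x] by (simp add: algebra_simps)
  qed
qed

lemma shift_int:
  fixes f :: "'a::euclidean_space \<Rightarrow> real"
  assumes [measurable]: "f \<in> borel_measurable borel"
  shows "integrable lborel (\<lambda>w. f (c + w)) \<longleftrightarrow> integrable lborel f"
    and "(\<integral>w. f (c + w) \<partial>lborel) = (\<integral>w. f w \<partial>lborel)"
proof -
  have m: "((+) c) \<in> measurable lborel borel" by simp
  show "integrable lborel (\<lambda>w. f (c + w)) \<longleftrightarrow> integrable lborel f"
    using integrable_distr_eq[OF m assms] by (simp add: lborel_distr_plus)
  show "(\<integral>w. f (c + w) \<partial>lborel) = (\<integral>w. f w \<partial>lborel)"
    using integral_distr[OF m assms] by (simp add: lborel_distr_plus)
qed

lemma gd_shift:
  fixes w u :: "'a::euclidean_space"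
  assumes "norm u = 1"
  shows "gauss_density (w - r *\<^sub>R u) = gauss_density w * exp (r * (w \<bullet> u) - r\<^sup>2 / 2)"
proof -
  have uu: "u \<bullet> u = 1" using assms by (metis power2_norm_eq_inner power_one)
  have "(norm (w - r *\<^sub>R u))\<^sup>2 = (w - r *\<^sub>R u) \<bullet> (w - r *\<^sub>R u)" by (rule power2_norm_eq_inner)
  also have "\<dots> = w \<bullet> w - 2 * r * (w \<bullet> u) + r\<^sup>2 * (u \<bullet> u)"
    by (simp add: inner_diff_left inner_diff_right inner_commute algebra_simps power2_eq_square)
  also have "w \<bullet> w = (norm w)\<^sup>2" by (simp add: power2_norm_eq_inner)
  finally have "(norm (w - r *\<^sub>R u))\<^sup>2 = (norm w)\<^sup>2 - 2 * r * (w \<bullet> u) + r\<^sup>2"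
    using uu by simp
  then have "exp (- (norm (w - r *\<^sub>R u))\<^sup>2 / 2) = exp (- (norm w)\<^sup>2 / 2) * exp (r * (w \<bullet> u) - r\<^sup>2 / 2)"
    by (simp add: exp_add[symmetric] field_simps)
  then show ?thesis by (simp add: gauss_density_def)
qed

lemma lip_cont:
  fixes G :: "'a::euclidean_space \<Rightarrow> real"
  assumes lipG: "\<forall>x y. \<bar>G x - G y\<bar> \<le> L * norm (x - y)"
  shows "continuous_on UNIV G"
proof -
  have "\<bar>L\<bar>-lipschitz_on UNIV G"
  proof (rule lipschitz_onI)
    fix x y :: 'a
    have "\<bar>G x - G y\<bar> \<le> L * norm (x - y)" using lipG by blast
    also have "\<dots> \<le> \<bar>L\<bar> * norm (x - y)" by (rule mult_right_mono) auto
    finally show "dist (G x) (G y) \<le> \<bar>L\<bar> * dist x y" by (simp add: dist_real_def dist_norm)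
  qed simp
  then show ?thesis by (rule lipschitz_on_continuous_on)
qed

lemma smooth_int:
  fixes G :: "'a::euclidean_space \<Rightarrow> real"
  assumes lipG: "\<forall>x y. \<bar>G x - G y\<bar> \<le> L * norm (x - y)"
  shows "integrable lborel (\<lambda>v. G (x + \<eta> *\<^sub>R v) * gauss_density v)"
proof -
  have [measurable]: "G \<in> borel_measurable borel"
    by (rule borel_measurable_continuous_onI[OF lip_cont[OF lipG]])
  show ?thesis
  proof (rule Bochner_Integration.integrable_bound[OF Bochner_Integration.integrable_add[OF integrable_mult_right[OF int_gd, of "\<bar>G x\<bar>"]
        integrable_mult_right[OF int_gd1, of "\<bar>L\<bar> * \<bar>\<eta>\<bar>"]]])
    show "(\<lambda>v. G (x + \<eta> *\<^sub>R v) * gauss_density v) \<in> borel_measurable lborel" by measurable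
    show "AE v in lborel. norm (G (x + \<eta> *\<^sub>R v) * gauss_density v)
       \<le> norm (\<bar>G x\<bar> * gauss_density v + \<bar>L\<bar> * \<bar>\<eta>\<bar> * (norm v * gauss_density v))"
    proof (rule AE_I2)
      fix v :: 'a
      have "\<bar>G (x + \<eta> *\<^sub>R v) - G x\<bar> \<le> L * norm (\<eta> *\<^sub>R v)" using lipG[rule_format, of "x + \<eta> *\<^sub>R v" x] by simp
      also have "\<dots> \<le> \<bar>L\<bar> * (\<bar>\<eta>\<bar> * norm v)" by (simp add: mult_right_mono)
      finally have "\<bar>G (x + \<eta> *\<^sub>R v)\<bar> \<le> \<bar>G x\<bar> + \<bar>L\<bar> * \<bar>\<eta>\<bar> * norm v" by simp
      hence "\<bar>G (x + \<eta> *\<^sub>R v)\<bar> * gauss_density v \<le> (\<bar>G x\<bar> + \<bar>L\<bar> * \<bar>\<eta>\<bar> * norm v) * gauss_density v"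
        by (rule mult_right_mono) (rule gd_nonneg)
      thus "norm (G (x + \<eta> *\<^sub>R v) * gauss_density v)
       \<le> norm (\<bar>G x\<bar> * gauss_density v + \<bar>L\<bar> * \<bar>\<eta>\<bar> * (norm v * gauss_density v))"
        using gd_nonneg[of v] by (simp add: abs_mult algebra_simps)
    qed
  qed
qed


lemma exp_m1_le: "exp x - 1 \<le> x * exp (x::real)"
proof -
  have "1 - x \<le> exp (- x)" using exp_ge_add_one_self[of "-x"] by simp
  then have "(1 - x) * exp x \<le> exp (-x) * exp x" by (rule mult_right_mono) simp
  then show ?thesis by (simp add: exp_minus field_simps)
qed

lemma amgm_aux:
  fixes n a p s :: real
  assumes "p > 0" "s > 0" "n \<ge> 0"
  shows "n * \<bar>a\<bar> \<le> (s * (n\<^sup>2 * p) + a\<^sup>2 / p / s) / 2"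
proof -
  have "0 \<le> (s * p * n - \<bar>a\<bar>)\<^sup>2" by simp
  then have "2 * (s * p) * (n * \<bar>a\<bar>) \<le> (s * p) * (s * (n\<^sup>2 * p)) + a\<^sup>2"
    by (simp add: power2_eq_square algebra_simps)
  then show ?thesis using assms by (simp add: field_simps power2_eq_square)
qed

lemma est_lemma:
  fixes G :: "'a::euclidean_space \<Rightarrow> real"
  assumes lipG: "\<forall>x y. \<bar>G x - G y\<bar> \<le> L * norm (x - y)"
    and bnd: "\<forall>y. \<bar>G y - G \<theta>\<bar> \<le> K * norm (y - \<theta>)"
    and eta: "\<eta> > 0" and u: "norm u = 1" and t: "t > 0"
  shows "\<bar>gauss_smooth G \<eta> (\<theta> + t *\<^sub>R u) - gauss_smooth G \<eta> \<theta>\<bar>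
          \<le> K / 2 * (real DIM('a) + (exp ((t/\<eta>)\<^sup>2) - 1) / (t/\<eta>)\<^sup>2) * t"
proof -
  define s where "s = t / \<eta>"
  have s: "s > 0" using eta t by (simp add: s_def)
  have ts: "t = \<eta> * s" using eta by (simp add: s_def)
  define d where "d = real DIM('a)"
  let ?\<phi> = "gauss_density :: 'a \<Rightarrow> real"
  have [measurable]: "G \<in> borel_measurable borel"
    by (rule borel_measurable_continuous_onI[OF lip_cont[OF lipG]])
  have I1: "integrable lborel (\<lambda>w. G (\<theta> + \<eta> *\<^sub>R w) * ?\<phi> w)"
    by (rule smooth_int[OF lipG])
  have f0: "gauss_smooth G \<eta> \<theta> = (\<integral>w. G (\<theta> + \<eta> *\<^sub>R w) * ?\<phi> w \<partial>lborel)"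
    by (simp add: gauss_smooth_def)
  define F0 where "F0 v = G (\<theta> + t *\<^sub>R u + \<eta> *\<^sub>R v) * ?\<phi> v" for v
  have [measurable]: "F0 \<in> borel_measurable borel" unfolding F0_def[abs_def] by measurable
  have F0i: "integrable lborel F0" unfolding F0_def by (rule smooth_int[OF lipG])
  have F0s: "F0 (- s *\<^sub>R u + w) = G (\<theta> + \<eta> *\<^sub>R w) * ?\<phi> (w - s *\<^sub>R u)" for w
  proof -
    have eq: "\<theta> + t *\<^sub>R u + \<eta> *\<^sub>R (w - s *\<^sub>R u) = \<theta> + \<eta> *\<^sub>R w"
      by (simp add: ts scaleR_add_right algebra_simps)
    have e: "- s *\<^sub>R u + w = w - s *\<^sub>R u" by simp
    show ?thesis by (simp only: F0_def e eq)
  qed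
  have F0l: "(\<lambda>w. F0 (- s *\<^sub>R u + w)) = (\<lambda>w. G (\<theta> + \<eta> *\<^sub>R w) * ?\<phi> (w - s *\<^sub>R u))"
    using F0s by (intro ext)
  have I2: "integrable lborel (\<lambda>w. G (\<theta> + \<eta> *\<^sub>R w) * ?\<phi> (w - s *\<^sub>R u))"
    using shift_int(1)[of F0 "- s *\<^sub>R u"] F0i unfolding F0l by simp
  have ft: "gauss_smooth G \<eta> (\<theta> + t *\<^sub>R u) = (\<integral>w. G (\<theta> + \<eta> *\<^sub>R w) * ?\<phi> (w - s *\<^sub>R u) \<partial>lborel)"
    using shift_int(2)[of F0 "- s *\<^sub>R u"] unfolding F0l by (simp add: gauss_smooth_def F0_def)
  have P: "has_bochner_integral lborel (\<lambda>w. ?\<phi> (w - r *\<^sub>R u)) 1" for r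
  proof -
    have "integrable lborel (\<lambda>w. ?\<phi> (- r *\<^sub>R u + w))" "(\<integral>w. ?\<phi> (- r *\<^sub>R u + w) \<partial>lborel) = 1"
      using shift_int[of ?\<phi> "- r *\<^sub>R u"] int_gd int_gd_eq by auto
    then show ?thesis by (simp add: has_bochner_integral_iff)
  qed
  have P0: "has_bochner_integral lborel ?\<phi> 1" using int_gd int_gd_eq by (simp add: has_bochner_integral_iff)
  have P2: "has_bochner_integral lborel (\<lambda>w. (norm w)\<^sup>2 * ?\<phi> w) d"
    using int_gd2 int_gd2_eq by (simp add: has_bochner_integral_iff d_def)
  define h where "h w = ?\<phi> (w - s *\<^sub>R u) - ?\<phi> w" for w
  define A where "A w = G (\<theta> + \<eta> *\<^sub>R w) - G \<theta>" for w
  have Hb: "has_bochner_integral lborel h 0"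
    using has_bochner_integral_diff[OF P[of s] P0] by (simp add: h_def[abs_def])
  have diff: "gauss_smooth G \<eta> (\<theta> + t *\<^sub>R u) - gauss_smooth G \<eta> \<theta> = (\<integral>w. A w * h w \<partial>lborel)"
  proof -
    have "has_bochner_integral lborel (\<lambda>w. G (\<theta> + \<eta> *\<^sub>R w) * ?\<phi> (w - s *\<^sub>R u) - G (\<theta> + \<eta> *\<^sub>R w) * ?\<phi> w - G \<theta> * h w)
      (gauss_smooth G \<eta> (\<theta> + t *\<^sub>R u) - gauss_smooth G \<eta> \<theta> - G \<theta> * 0)"
      by (intro has_bochner_integral_diff has_bochner_integral_mult_right Hb)
         (simp_all add: has_bochner_integral_iff I1 I2 ft f0)
    moreover have "(\<lambda>w. G (\<theta> + \<eta> *\<^sub>R w) * ?\<phi> (w - s *\<^sub>R u) - G (\<theta> + \<eta> *\<^sub>R w) * ?\<phi> w - G \<theta> * h w)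
       = (\<lambda>w. A w * h w)"
      by (auto simp: fun_eq_iff A_def h_def algebra_simps)
    ultimately show ?thesis by (simp add: has_bochner_integral_iff)
  qed
  have intAH: "integrable lborel (\<lambda>w. A w * h w)"
  proof -
    have hi: "integrable lborel h" using Hb by (simp add: has_bochner_integral_iff)
    have "integrable lborel (\<lambda>w. G (\<theta> + \<eta> *\<^sub>R w) * ?\<phi> (w - s *\<^sub>R u) - G (\<theta> + \<eta> *\<^sub>R w) * ?\<phi> w - G \<theta> * h w)"
      by (intro Bochner_Integration.integrable_diff integrable_mult_right I1 I2 hi)
    moreover have "(\<lambda>w. G (\<theta> + \<eta> *\<^sub>R w) * ?\<phi> (w - s *\<^sub>R u) - G (\<theta> + \<eta> *\<^sub>R w) * ?\<phi> w - G \<theta> * h w)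
       = (\<lambda>w. A w * h w)"
      by (auto simp: fun_eq_iff A_def h_def algebra_simps)
    ultimately show ?thesis by simp
  qed
  define B where "B w = K * \<eta> / 2 * (s * ((norm w)\<^sup>2 * ?\<phi> w) +
      (exp (s\<^sup>2) * ?\<phi> (w - (2 * s) *\<^sub>R u) - 2 * ?\<phi> (w - s *\<^sub>R u) + ?\<phi> w) / s)" for w
  have HB: "has_bochner_integral lborel B (K * \<eta> / 2 * (s * d + (exp (s\<^sup>2) * 1 - 2 * 1 + 1) / s))"
    unfolding B_def
    by (intro has_bochner_integral_mult_right has_bochner_integral_add has_bochner_integral_diff
        has_bochner_integral_divide_zero P P0 P2)
  have hsq: "(h w)\<^sup>2 / ?\<phi> w / s = (exp (s\<^sup>2) * ?\<phi> (w - (2 * s) *\<^sub>R u) - 2 * ?\<phi> (w - s *\<^sub>R u) + ?\<phi> w) / s" for w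
  proof -
    define a where "a = w \<bullet> u"
    have e1: "?\<phi> (w - s *\<^sub>R u) = ?\<phi> w * exp (s * a - s\<^sup>2 / 2)" using gd_shift[OF u] by (simp add: a_def)
    have e2: "?\<phi> (w - (2 * s) *\<^sub>R u) = ?\<phi> w * exp ((2 * s) * a - (2 * s)\<^sup>2 / 2)" using gd_shift[OF u] by (simp add: a_def)
    have ee: "exp (s * a - s\<^sup>2 / 2) ^ 2 = exp (s\<^sup>2) * exp ((2 * s) * a - (2 * s)\<^sup>2 / 2)"
    proof -
      have "exp (s * a - s\<^sup>2 / 2) ^ 2 = exp ((s * a - s\<^sup>2 / 2) + (s * a - s\<^sup>2 / 2))"
        by (simp only: power2_eq_square exp_add[symmetric])
      also have "(s * a - s\<^sup>2 / 2) + (s * a - s\<^sup>2 / 2) = s\<^sup>2 + ((2 * s) * a - (2 * s)\<^sup>2 / 2)"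
        by (simp add: power2_eq_square algebra_simps)
      also have "exp (s\<^sup>2 + ((2 * s) * a - (2 * s)\<^sup>2 / 2)) = exp (s\<^sup>2) * exp ((2 * s) * a - (2 * s)\<^sup>2 / 2)"
        by (rule exp_add)
      finally show ?thesis .
    qed
    define E where "E = exp (s * a - s\<^sup>2 / 2)"
    define p where "p = ?\<phi> w"
    have p: "p > 0" using gd_pos[of w] by (simp add: p_def)
    have alg: "(p * E - p)\<^sup>2 / p / s = (p * E\<^sup>2 - 2 * (p * E) + p) / s"
      using p s by (simp add: field_simps power2_eq_square)
    have "h w = p * E - p" by (simp add: h_def e1 p_def E_def)
    moreover have "exp (s\<^sup>2) * ?\<phi> (w - (2 * s) *\<^sub>R u) = p * E\<^sup>2"
      by (simp add: e2 ee E_def p_def)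
    moreover have "?\<phi> (w - s *\<^sub>R u) = p * E" by (simp add: e1 p_def E_def)
    ultimately show ?thesis using alg by (simp add: p_def)
  qed
  have pw: "\<bar>A w * h w\<bar> \<le> B w" for w
  proof -
    have "\<bar>A w\<bar> \<le> K * norm (\<eta> *\<^sub>R w)" using bnd[rule_format, of "\<theta> + \<eta> *\<^sub>R w"] by (simp add: A_def)
    also have "\<dots> = K * \<eta> * norm w" using eta by simp
    finally have Aw: "\<bar>A w\<bar> \<le> K * \<eta> * norm w" .
    have K0: "K * \<eta> \<ge> 0"
    proof -
      have "\<bar>G (\<theta> + \<eta> *\<^sub>R u) - G \<theta>\<bar> \<le> K * norm ((\<theta> + \<eta> *\<^sub>R u) - \<theta>)" using bnd by blast
      also have "norm ((\<theta> + \<eta> *\<^sub>R u) - \<theta>) = \<eta>" using eta u by simp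
      finally show ?thesis by (meson abs_ge_zero order_trans)
    qed
    have "\<bar>A w * h w\<bar> \<le> K * \<eta> * norm w * \<bar>h w\<bar>"
      by (simp add: abs_mult mult_right_mono Aw)
    also have "\<dots> = K * \<eta> * (norm w * \<bar>h w\<bar>)" by simp
    also have "\<dots> \<le> K * \<eta> * ((s * ((norm w)\<^sup>2 * ?\<phi> w) + (h w)\<^sup>2 / ?\<phi> w / s) / 2)"
      by (rule mult_left_mono[OF amgm_aux[OF gd_pos s norm_ge_zero] K0])
    also have "\<dots> = B w" unfolding B_def hsq[symmetric] by (simp add: field_simps)
    finally show ?thesis .
  qed
  have "\<bar>gauss_smooth G \<eta> (\<theta> + t *\<^sub>R u) - gauss_smooth G \<eta> \<theta>\<bar> \<le> (\<integral>w. B w \<partial>lborel)"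
    unfolding diff
    by (rule integral_abs_bound_integral)
       (auto simp: pw intAH has_bochner_integral_iff[THEN iffD1, OF HB])
  also have "\<dots> = K * \<eta> / 2 * (s * d + (exp (s\<^sup>2) - 1) / s)"
    using HB by (simp add: has_bochner_integral_iff)
  also have "\<dots> = K / 2 * (d + (exp (s\<^sup>2) - 1) / s\<^sup>2) * t"
    using s eta by (simp add: ts field_simps power2_eq_square)
  finally show ?thesis by (simp add: d_def s_def)
qed



lemma deriv_bound:
  fixes G :: "'a::euclidean_space \<Rightarrow> real"
  assumes lipG: "\<forall>x y. \<bar>G x - G y\<bar> \<le> L * norm (x - y)"
    and bnd: "\<forall>y. \<bar>G y - G \<theta>\<bar> \<le> K * norm (y - \<theta>)"
    and eta: "\<eta> > 0"
    and der: "(gauss_smooth G \<eta> has_derivative (\<lambda>h. g \<bullet> h)) (at \<theta>)"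
  shows "norm g \<le> K * (real DIM('a) + 1) / 2"
proof -
  define d where "d = real DIM('a)"
  obtain b :: 'a where b: "b \<in> Basis" using nonempty_Basis by blast
  have K0: "K \<ge> 0"
  proof -
    have "\<bar>G (\<theta> + b) - G \<theta>\<bar> \<le> K * norm ((\<theta> + b) - \<theta>)" using bnd by blast
    also have "norm ((\<theta> + b) - \<theta>) = 1" using b by simp
    finally show ?thesis by (smt (verit) abs_ge_zero)
  qed
  have key: "g \<bullet> u \<le> K * (d + 1) / 2" if u: "norm u = 1" for u
  proof -
    define f where "f t = gauss_smooth G \<eta> (\<theta> + t *\<^sub>R u)" for t
    have "((\<lambda>t::real. \<theta> + t *\<^sub>R u) has_derivative (\<lambda>t. t *\<^sub>R u)) (at 0)"
      by (auto intro!: derivative_eq_intros)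
    from diff_chain_at[OF this, of "gauss_smooth G \<eta>" "\<lambda>h. g \<bullet> h"] der
    have "(f has_derivative (\<lambda>t. t * (g \<bullet> u))) (at 0)" by (simp add: f_def[abs_def] o_def)
    moreover have "(\<lambda>t. t * (g \<bullet> u)) = (*) (g \<bullet> u)" by (auto simp: fun_eq_iff)
    ultimately have "(f has_field_derivative (g \<bullet> u)) (at 0)"
      by (simp add: has_field_derivative_def)
    then have "((\<lambda>t. (f (0 + t) - f 0) / t) \<longlongrightarrow> g \<bullet> u) (at 0)"
      by (simp add: DERIV_def)
    then have lim: "((\<lambda>t. (f t - f 0) / t) \<longlongrightarrow> g \<bullet> u) (at_right 0)"
      by (simp add: filterlim_at_split)
    have lim2: "((\<lambda>t. K / 2 * (d + exp ((t / \<eta>)\<^sup>2))) \<longlongrightarrow> K / 2 * (d + exp ((0 / \<eta>)\<^sup>2))) (at_right 0)"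
      using eta by (intro tendsto_intros) auto
    have ev: "eventually (\<lambda>t. (f t - f 0) / t \<le> K / 2 * (d + exp ((t / \<eta>)\<^sup>2))) (at_right 0)"
      using eventually_at_right_less[of "0::real"]
    proof (rule eventually_mono)
      fix t :: real assume t: "0 < t"
      have "\<bar>f t - f 0\<bar> \<le> K / 2 * (d + (exp ((t/\<eta>)\<^sup>2) - 1) / (t/\<eta>)\<^sup>2) * t"
        using est_lemma[OF lipG bnd eta u t] by (simp add: f_def d_def)
      also have "(exp ((t/\<eta>)\<^sup>2) - 1) / (t/\<eta>)\<^sup>2 \<le> exp ((t/\<eta>)\<^sup>2)"
        using exp_m1_le[of "(t/\<eta>)\<^sup>2"] t eta by (simp add: divide_le_eq mult.commute)
      then have "K / 2 * (d + (exp ((t/\<eta>)\<^sup>2) - 1) / (t/\<eta>)\<^sup>2) * t \<le> K / 2 * (d + exp ((t/\<eta>)\<^sup>2)) * t"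
        using K0 t by (intro mult_right_mono mult_left_mono) auto
      finally have "\<bar>f t - f 0\<bar> \<le> K / 2 * (d + exp ((t/\<eta>)\<^sup>2)) * t" .
      then show "(f t - f 0) / t \<le> K / 2 * (d + exp ((t / \<eta>)\<^sup>2))"
        using t by (simp add: divide_le_eq abs_le_iff) (smt (verit) abs_ge_self)
    qed
    have "g \<bullet> u \<le> K / 2 * (d + exp ((0 / \<eta>)\<^sup>2))"
      by (rule tendsto_le[OF trivial_limit_at_right_real lim2 lim ev])
    then show ?thesis by simp
  qed
  show ?thesis
  proof (cases "g = 0")
    case True then show ?thesis using K0 by simp
  next
    case False
    have "g \<bullet> (g /\<^sub>R norm g) \<le> K * (d + 1) / 2" by (rule key) (use False in simp)
    moreover have "g \<bullet> (g /\<^sub>R norm g) = norm g"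
      using False by (simp add: power2_norm_eq_inner[symmetric] power2_eq_square)
    ultimately show ?thesis by (simp add: d_def)
  qed
qed



theorem lemma2:
  fixes F :: "'a::euclidean_space \<Rightarrow> real"
    and L0 \<eta>1 \<eta>2 :: real
    and \<theta> g1 g2 :: 'a
  assumes lip: "\<forall>x y. \<bar>F x - F y\<bar> \<le> L0 * norm (x - y)"
    and pos1: "\<eta>1 > 0" and pos2: "\<eta>2 > 0"
    and grad1: "(gauss_smooth F \<eta>1 has_derivative (\<lambda>h. g1 \<bullet> h)) (at \<theta>)"
    and grad2: "(gauss_smooth F \<eta>2 has_derivative (\<lambda>h. g2 \<bullet> h)) (at \<theta>)"
  shows "norm (g2 - g1) \<le> 2 * L0 * real DIM('a) * \<bar>\<eta>2 - \<eta>1\<bar> / \<eta>2"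
proof -
  define c where "c = \<eta>1 / \<eta>2"
  have c0: "c > 0" using pos1 pos2 by (simp add: c_def)
  have e1: "\<eta>1 = c * \<eta>2" using pos2 by (simp add: c_def)
  define d where "d = real DIM('a)"
  have d1: "d \<ge> 1" by (simp add: d_def DIM_positive Suc_le_eq)
  obtain b :: 'a where b: "b \<in> Basis" using nonempty_Basis by blast
  have L0: "L0 \<ge> 0"
  proof -
    have "\<bar>F (\<theta> + b) - F \<theta>\<bar> \<le> L0 * norm ((\<theta> + b) - \<theta>)" using lip by blast
    also have "norm ((\<theta> + b) - \<theta>) = 1" using b by simp
    finally show ?thesis by (smt (verit) abs_ge_zero)
  qed
  define Ft where "Ft x = F (\<theta> + c *\<^sub>R (x - \<theta>))" for x
  have lipFt: "\<forall>x y. \<bar>Ft x - Ft y\<bar> \<le> (L0 * c) * norm (x - y)"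
  proof (intro allI)
    fix x y :: 'a
    have "\<bar>Ft x - Ft y\<bar> \<le> L0 * norm ((\<theta> + c *\<^sub>R (x - \<theta>)) - (\<theta> + c *\<^sub>R (y - \<theta>)))"
      using lip[rule_format, of "\<theta> + c *\<^sub>R (x - \<theta>)" "\<theta> + c *\<^sub>R (y - \<theta>)"] by (simp add: Ft_def)
    also have "(\<theta> + c *\<^sub>R (x - \<theta>)) - (\<theta> + c *\<^sub>R (y - \<theta>)) = c *\<^sub>R (x - y)"
      by (simp add: algebra_simps)
    finally show "\<bar>Ft x - Ft y\<bar> \<le> (L0 * c) * norm (x - y)" using c0 by simp
  qed
  have smooth_eq: "gauss_smooth Ft \<eta>2 = (\<lambda>x. gauss_smooth F \<eta>1 (\<theta> + c *\<^sub>R (x - \<theta>)))"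
  proof (rule ext)
    fix x :: 'a
    have "\<theta> + c *\<^sub>R (x + \<eta>2 *\<^sub>R v - \<theta>) = \<theta> + c *\<^sub>R (x - \<theta>) + \<eta>1 *\<^sub>R v" for v :: 'a
      by (simp add: e1 algebra_simps)
    then show "gauss_smooth Ft \<eta>2 x = gauss_smooth F \<eta>1 (\<theta> + c *\<^sub>R (x - \<theta>))"
      by (simp add: gauss_smooth_def Ft_def add.assoc)
  qed
  have aff: "((\<lambda>x. \<theta> + c *\<^sub>R (x - \<theta>)) has_derivative (\<lambda>h. c *\<^sub>R h)) (at \<theta>)"
    by (auto intro!: derivative_eq_intros)
  have g1': "(gauss_smooth F \<eta>1 has_derivative (\<lambda>h. g1 \<bullet> h)) (at ((\<lambda>x. \<theta> + c *\<^sub>R (x - \<theta>)) \<theta>))"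
    using grad1 by simp
  have derFt: "(gauss_smooth Ft \<eta>2 has_derivative (\<lambda>h. (c *\<^sub>R g1) \<bullet> h)) (at \<theta>)"
    using diff_chain_at[OF aff g1'] by (simp add: smooth_eq o_def)
  define D where "D x = Ft x - F x" for x
  have lipD: "\<forall>x y. \<bar>D x - D y\<bar> \<le> (L0 * c + L0) * norm (x - y)"
  proof (intro allI)
    fix x y :: 'a
    have "\<bar>D x - D y\<bar> \<le> \<bar>Ft x - Ft y\<bar> + \<bar>F x - F y\<bar>" by (simp add: D_def)
    also have "\<dots> \<le> (L0 * c) * norm (x - y) + L0 * norm (x - y)"
      using lipFt lip by (intro add_mono) auto
    finally show "\<bar>D x - D y\<bar> \<le> (L0 * c + L0) * norm (x - y)" by (simp add: algebra_simps)
  qed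
  have smooth_D: "gauss_smooth D \<eta>2 = (\<lambda>x. gauss_smooth Ft \<eta>2 x - gauss_smooth F \<eta>2 x)"
  proof (rule ext)
    fix x :: 'a
    have "gauss_smooth Ft \<eta>2 x - gauss_smooth F \<eta>2 x =
       (\<integral>v. Ft (x + \<eta>2 *\<^sub>R v) * gauss_density v - F (x + \<eta>2 *\<^sub>R v) * gauss_density v \<partial>lborel)"
      unfolding gauss_smooth_def
      by (rule Bochner_Integration.integral_diff[symmetric]) (rule smooth_int[OF lipFt], rule smooth_int[OF lip])
    then show "gauss_smooth D \<eta>2 x = gauss_smooth Ft \<eta>2 x - gauss_smooth F \<eta>2 x"
      by (simp add: gauss_smooth_def D_def algebra_simps)
  qed
  have derD: "(gauss_smooth D \<eta>2 has_derivative (\<lambda>h. (c *\<^sub>R g1 - g2) \<bullet> h)) (at \<theta>)"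
    unfolding smooth_D using has_derivative_diff[OF derFt grad2] by (simp add: inner_diff_left)
  have bndD: "\<forall>y. \<bar>D y - D \<theta>\<bar> \<le> (L0 * \<bar>c - 1\<bar>) * norm (y - \<theta>)"
  proof
    fix y :: 'a
    have "\<bar>D y - D \<theta>\<bar> = \<bar>F (\<theta> + c *\<^sub>R (y - \<theta>)) - F y\<bar>" by (simp add: D_def Ft_def)
    also have "\<dots> \<le> L0 * norm ((\<theta> + c *\<^sub>R (y - \<theta>)) - y)" using lip by blast
    also have "(\<theta> + c *\<^sub>R (y - \<theta>)) - y = (c - 1) *\<^sub>R (y - \<theta>)" by (simp add: algebra_simps)
    finally show "\<bar>D y - D \<theta>\<bar> \<le> (L0 * \<bar>c - 1\<bar>) * norm (y - \<theta>)" by simp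
  qed
  have nD: "norm (c *\<^sub>R g1 - g2) \<le> (L0 * \<bar>c - 1\<bar>) * (d + 1) / 2"
    using deriv_bound[OF lipD bndD pos2 derD] by (simp add: d_def)
  have bndF: "\<forall>y. \<bar>F y - F \<theta>\<bar> \<le> L0 * norm (y - \<theta>)" using lip by blast
  have n1: "norm g1 \<le> L0 * (d + 1) / 2"
    using deriv_bound[OF lip bndF pos1 grad1] by (simp add: d_def)
  have "g2 - g1 = (c - 1) *\<^sub>R g1 - (c *\<^sub>R g1 - g2)" by (simp add: algebra_simps)
  then have t1: "norm (g2 - g1) \<le> norm ((c - 1) *\<^sub>R g1) + norm (c *\<^sub>R g1 - g2)"
    by (metis norm_triangle_ineq4)
  have t2: "norm ((c - 1) *\<^sub>R g1) \<le> \<bar>c - 1\<bar> * (L0 * (d + 1) / 2)"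
    using mult_left_mono[OF n1, of "\<bar>c - 1\<bar>"] by simp
  have calc1: "norm (g2 - g1) \<le> norm (c *\<^sub>R g1 - g2) + \<bar>c - 1\<bar> * (L0 * (d + 1) / 2)"
    using t1 t2 by linarith
  have eq: "\<bar>c - 1\<bar> * (L0 * (d + 1) / 2) = (L0 * \<bar>c - 1\<bar>) * (d + 1) / 2" by (simp add: algebra_simps)
  have "norm (g2 - g1) \<le> (L0 * \<bar>c - 1\<bar>) * (d + 1)" using calc1 eq nD by linarith
  also have "\<bar>c - 1\<bar> = \<bar>\<eta>2 - \<eta>1\<bar> / \<eta>2"
  proof -
    have "c - 1 = (\<eta>1 - \<eta>2) / \<eta>2" using pos2 by (simp add: c_def field_simps)
    then have "\<bar>c - 1\<bar> = \<bar>\<eta>1 - \<eta>2\<bar> / \<eta>2" using pos2 by simp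
    then show ?thesis by (simp add: abs_minus_commute)
  qed
  also have "L0 * (\<bar>\<eta>2 - \<eta>1\<bar> / \<eta>2) * (d + 1) \<le> L0 * (\<bar>\<eta>2 - \<eta>1\<bar> / \<eta>2) * (2 * d)"
    using d1 L0 pos2 by (intro mult_left_mono) auto
  finally show ?thesis by (simp add: d_def algebra_simps)
qed


end
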